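(* Let $\kappa$ satisfy (A-$\kappa$) in the context, and let $0<\delta_0<1$ and $r_0>0$. Then for every positive integer $k$ there exist $\mu=\mu(r_0,\delta_0,k)>0$ and a positive integer $i=i(r_0,\delta_0,k)$ such that $$\inf_{x\in B_{kr_0}(0)}\sum_{j=0}^{i}\frac{(\mathcal{K}^ju)(x)}{j!}\ge\mu$$ for every $u\in L^\infty(\mathbb{R}^N)$ with $u\ge0$ and $\int_{B_{r_0}(0)}u\,dx\ge\delta_0$. In particular, for such $u$, $(e^{\mathcal{K}}u)(x)\ge\mu$ for all $x\in B_{kr_0}(0)$.
   Context: Assumption (A-$\kappa$): $\kappa\in C^1(\mathbb{R}^N,[0,\infty))$, $\kappa(0)>0$, $\int_{\mathbb{R}^N}\kappa=1$, and there are $\mu',M>0$ with $\kappa(x)\le e^{-\mu'|x|}$ and $|\nabla\kappa(x)|\le e^{-\mu'|x|}$ for $|x|\ge M$. $\mathcal{K}$ is the convolution operator $(\mathcal{K}u)(x)=\int_{\mathbb{R}^N}\kappa(y-x)u(y)\,dy$ on $L^\infty(\mathbb{R}^N)$, $\mathcal{K}^j$ its $j$-th power ($\mathcal{K}^0=I$), $e^{\mathcal{K}}=\sum_{j\ge0}\mathcal{K}^j/j!$, and $B_r(x_0)=\{x\in\mathbb{R}^N:|x-x_0|<r\}$. *)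

theory Defs
  imports "HOL-Analysis.Analysis"
begin

definition conv_op :: "('a::euclidean_space \<Rightarrow> real) \<Rightarrow> ('a \<Rightarrow> real) \<Rightarrow> 'a \<Rightarrow> real" where
  "conv_op \<kappa> u x = (LINT y|lborel. \<kappa> (y - x) * u y)"

definition kappa_assm :: "('a::euclidean_space \<Rightarrow> real) \<Rightarrow> bool" where
  "kappa_assm \<kappa> \<longleftrightarrow>
     (\<exists>g :: 'a \<Rightarrow> 'a. (\<forall>x. (\<kappa> has_derivative (\<lambda>h. g x \<bullet> h)) (at x)) \<and> continuous_on UNIV g \<and>
        (\<exists>\<mu>' M. \<mu>' > 0 \<and> M > 0 \<and>
           (\<forall>x. norm x \<ge> M \<longrightarrow> \<kappa> x \<le> exp (- \<mu>' * norm x) \<and> norm (g x) \<le> exp (- \<mu>' * norm x)))) \<and>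
     (\<forall>x. \<kappa> x \<ge> 0) \<and> \<kappa> 0 > 0 \<and>
     integrable lborel \<kappa> \<and> (LINT x|lborel. \<kappa> x) = 1"

text \<open>Nonnegative essentially bounded measurable functions (representatives of L^infinity classes).\<close>
definition Linf_nonneg :: "('a::euclidean_space \<Rightarrow> real) \<Rightarrow> bool" where
  "Linf_nonneg u \<longleftrightarrow> u \<in> borel_measurable lborel \<and> (\<exists>B. AE x in lborel. \<bar>u x\<bar> \<le> B) \<and> (\<forall>x. u x \<ge> 0)"

end

theory Submission
  imports Defs
begin


lemma transl_int:
  fixes f :: "'a::euclidean_space \<Rightarrow> real"
  assumes "integrable lborel f"
  shows "integrable lborel (\<lambda>y. f (y - x))" "(LINT y|lborel. f (y - x)) = (LINT y|lborel. f y)"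
proof -
  have m: "f \<in> borel_measurable borel" using assms by (simp add: borel_measurable_integrable)
  have d: "distr lborel borel ((+) (-x)) = lborel" by (rule lborel_distr_plus)
  have "integrable (distr lborel borel ((+) (-x))) f" using d assms by simp
  hence "integrable lborel (\<lambda>y. f (-x + y))"
    using integrable_distr_eq[of "(+) (-x)" lborel borel f] m by simp
  thus "integrable lborel (\<lambda>y. f (y - x))" by (simp add: add.commute)
  have "integral\<^sup>L (distr lborel borel ((+) (-x))) f = (LINT y|lborel. f (-x + y))"
    by (rule integral_distr) (auto simp: m)
  thus "(LINT y|lborel. f (y - x)) = (LINT y|lborel. f y)" using d by (simp add: add.commute)
qed

definition good :: "('a::euclidean_space \<Rightarrow> real) \<Rightarrow> real \<Rightarrow> bool" where
  "good v B \<longleftrightarrow> v \<in> borel_measurable lborel \<and> (AE y in lborel. v y \<le> B) \<and> (\<forall>y. 0 \<le> v y)"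

lemma kappa_cont: "kappa_assm \<kappa> \<Longrightarrow> continuous_on UNIV \<kappa>"
  unfolding kappa_assm_def
  by (metis has_derivative_continuous continuous_at_imp_continuous_on)

lemma kappa_meas: "kappa_assm \<kappa> \<Longrightarrow> \<kappa> \<in> borel_measurable borel"
  using kappa_cont borel_measurable_continuous_onI by blast

lemma integrable_kv:
  assumes k: "kappa_assm \<kappa>" and g: "good v B"
  shows "integrable lborel (\<lambda>y. \<kappa> (y - x) * v y)"
proof -
  have ik: "integrable lborel \<kappa>" using k unfolding kappa_assm_def by blast
  have i1: "integrable lborel (\<lambda>y. B * \<kappa> (y - x))" using transl_int(1)[OF ik] by simp
  have [measurable]: "\<kappa> \<in> borel_measurable borel" using kappa_meas[OF k] .
  have [measurable]: "v \<in> borel_measurable lborel" using g unfolding good_def by blast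
  have i2: "(\<lambda>y. \<kappa> (y - x) * v y) \<in> borel_measurable lborel" by measurable
  have i3: "AE y in lborel. norm (\<kappa> (y - x) * v y) \<le> norm (B * \<kappa> (y - x))"
    using g k unfolding good_def kappa_assm_def
    by (auto elim!: eventually_mono intro!: mult_right_mono simp: abs_mult mult.commute)
  show ?thesis by (rule Bochner_Integration.integrable_bound[OF i1 i2 i3])
qed

lemma good_conv:
  assumes k: "kappa_assm \<kappa>" and g: "good v B"
  shows "good (conv_op \<kappa> v) B" "conv_op \<kappa> v x \<le> B"
proof -
  have ik: "integrable lborel \<kappa>" and one: "(LINT x|lborel. \<kappa> x) = 1" and pos: "\<forall>x. \<kappa> x \<ge> 0"
    using k unfolding kappa_assm_def by blast+
  have [measurable]: "\<kappa> \<in> borel_measurable borel" using kappa_meas[OF k] .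
  have [measurable]: "v \<in> borel_measurable lborel" using g unfolding good_def by blast
  have le: "conv_op \<kappa> v x \<le> B" for x
  proof -
    have "conv_op \<kappa> v x \<le> (LINT y|lborel. B * \<kappa> (y - x))"
      unfolding conv_op_def
      apply (rule integral_mono_AE)
      using integrable_kv[OF k g] transl_int(1)[OF ik, of x] g pos unfolding good_def
      by (auto elim!: eventually_mono intro!: mult_right_mono simp: mult.commute)
    also have "\<dots> = B" using transl_int(2)[OF ik, of x] one by simp
    finally show ?thesis .
  qed
  show "conv_op \<kappa> v x \<le> B" by (rule le)
  have "(\<lambda>x. LINT y|lborel. \<kappa> (y - x) * v y) \<in> borel_measurable lborel" by measurable
  moreover have "\<forall>x. 0 \<le> conv_op \<kappa> v x" unfolding conv_op_def
    using g pos unfolding good_def by (auto intro!: integral_nonneg_AE)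
  ultimately show "good (conv_op \<kappa> v) B" using le unfolding good_def conv_op_def by auto
qed

lemma tri4:
  fixes x y z :: "'a::real_normed_vector"
  assumes "norm (z - y) < s" "norm (z - x) < 3 * s" "4 * s \<le> r" shows "norm (y - x) < r"
proof -
  have "norm (y - x) \<le> norm (z - x) + norm (z - y)" using norm_triangle_ineq4[of "z - x" "z - y"] by simp
  then show ?thesis using assms by linarith
qed

lemma set_int_u:
  assumes g: "good u B"
  shows "integrable lborel (\<lambda>y. indicator (ball z s) y * u y)"
proof -
  have [measurable]: "u \<in> borel_measurable lborel" using g unfolding good_def by blast
  show ?thesis
    apply (rule integrableI_bounded_set[where A="ball z s" and B=B])
    using g emeasure_lborel_ball_finite[of z s] unfolding good_def
    by (auto elim!: eventually_mono simp: indicator_def)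
qed

lemma step_low:
  assumes k: "kappa_assm \<kappa>" and c: "\<forall>y. norm y < \<rho> \<longrightarrow> \<kappa> y \<ge> c" and c0: "c \<ge> 0"
    and g: "good v B" and va: "\<forall>y\<in>ball z \<sigma>. v y \<ge> a" and a0: "a \<ge> 0"
    and s: "4 * \<sigma> \<le> \<rho>" and x: "x \<in> ball z (3 * \<sigma>)"
  shows "conv_op \<kappa> v x \<ge> c * a * measure lborel (ball z \<sigma>)"
proof -
  have pos: "\<forall>x. \<kappa> x \<ge> 0" using k unfolding kappa_assm_def by blast
  have "(LINT y|lborel. c * a * indicator (ball z \<sigma>) y) \<le> conv_op \<kappa> v x"
    unfolding conv_op_def
  proof (rule integral_mono)
    show "integrable lborel (\<lambda>y. c * a * indicator (ball z \<sigma>) y)"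
      using emeasure_lborel_ball_finite[of z \<sigma>] by (intro integrable_mult_right) (auto)
    show "integrable lborel (\<lambda>y. \<kappa> (y - x) * v y)" by (rule integrable_kv[OF k g])
    fix y
    show "c * a * indicator (ball z \<sigma>) y \<le> \<kappa> (y - x) * v y"
    proof (cases "y \<in> ball z \<sigma>")
      case True
      have "norm (y - x) < \<rho>" using True x s by (simp add: dist_norm) (rule tri4)
      hence "\<kappa> (y - x) \<ge> c" using c by blast
      moreover have "v y \<ge> a" using va True by blast
      ultimately show ?thesis using True c0 a0 by (simp add: mult_mono)
    next
      case False
      thus ?thesis using pos g unfolding good_def by simp
    qed
  qed
  moreover have "(LINT y|lborel. c * a * indicator (ball z \<sigma>) y) = c * a * measure lborel (ball z \<sigma>)"
    using emeasure_lborel_ball_finite[of z \<sigma>] by (simp add: measure_def)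
  ultimately show ?thesis by simp
qed

lemma step_first:
  assumes k: "kappa_assm \<kappa>" and c: "\<forall>y. norm y < \<rho> \<longrightarrow> \<kappa> y \<ge> c" and c0: "c \<ge> 0"
    and g: "good u B" and ud: "(LINT y:ball z \<sigma>|lborel. u y) \<ge> d"
    and s: "4 * \<sigma> \<le> \<rho>" and x: "x \<in> ball z (3 * \<sigma>)"
  shows "conv_op \<kappa> u x \<ge> c * d"
proof -
  have pos: "\<forall>x. \<kappa> x \<ge> 0" using k unfolding kappa_assm_def by blast
  have "(LINT y|lborel. c * (indicator (ball z \<sigma>) y * u y)) \<le> conv_op \<kappa> u x"
    unfolding conv_op_def
  proof (rule integral_mono)
    show "integrable lborel (\<lambda>y. c * (indicator (ball z \<sigma>) y * u y))"
      using set_int_u[OF g] by (intro integrable_mult_right) 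
    show "integrable lborel (\<lambda>y. \<kappa> (y - x) * u y)" by (rule integrable_kv[OF k g])
    fix y
    show "c * (indicator (ball z \<sigma>) y * u y) \<le> \<kappa> (y - x) * u y"
    proof (cases "y \<in> ball z \<sigma>")
      case True
      have "norm (y - x) < \<rho>" using True x s by (simp add: dist_norm) (rule tri4)
      hence "\<kappa> (y - x) \<ge> c" using c by blast
      thus ?thesis using True g unfolding good_def by (simp add: mult_right_mono)
    next
      case False
      thus ?thesis using pos g unfolding good_def by simp
    qed
  qed
  moreover have "(LINT y|lborel. c * (indicator (ball z \<sigma>) y * u y)) = c * (LINT y:ball z \<sigma>|lborel. u y)"
    by (simp add: set_lebesgue_integral_def)
  ultimately show ?thesis using ud c0 by (smt (verit) mult_left_mono)
qed

lemma cover_pick: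
  assumes g: "good u B" and C: "finite C" "ball 0 r \<subseteq> (\<Union>z\<in>C. ball z \<sigma>)"
    and ud: "(LINT y:ball 0 r|lborel. u y) \<ge> d" and d: "d > 0"
  shows "\<exists>z\<in>C. real (card C) * (LINT y:ball z \<sigma>|lborel. u y) \<ge> d"
proof (rule ccontr)
  assume "\<not> ?thesis"
  hence lt: "\<forall>z\<in>C. real (card C) * (LINT y:ball z \<sigma>|lborel. u y) < d" by auto
  have "(LINT y:ball 0 r|lborel. u y) \<le> (LINT y|lborel. (\<Sum>z\<in>C. indicator (ball z \<sigma>) y * u y))"
    unfolding set_lebesgue_integral_def
  proof (rule integral_mono)
    show "integrable lborel (\<lambda>y. indicator (ball 0 r) y *\<^sub>R u y)" using set_int_u[OF g] by simp
    show "integrable lborel (\<lambda>y. \<Sum>z\<in>C. indicator (ball z \<sigma>) y * u y)"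
      by (rule Bochner_Integration.integrable_sum) (rule set_int_u[OF g])
    fix y
    show "indicator (ball 0 r) y *\<^sub>R u y \<le> (\<Sum>z\<in>C. indicator (ball z \<sigma>) y * u y)"
    proof (cases "y \<in> ball 0 r")
      case True
      then obtain z where z: "z \<in> C" "y \<in> ball z \<sigma>" using C by blast
      have "indicator (ball z \<sigma>) y * u y \<le> (\<Sum>z\<in>C. indicator (ball z \<sigma>) y * u y)"
        by (rule member_le_sum[OF z(1)]) (use g C in \<open>auto simp: good_def\<close>)
      thus ?thesis using True z by simp
    next
      case False
      thus ?thesis using g by (simp add: good_def sum_nonneg)
    qed
  qed
  also have "\<dots> = (\<Sum>z\<in>C. (LINT y:ball z \<sigma>|lborel. u y))"
    unfolding set_lebesgue_integral_def
    by (subst Bochner_Integration.integral_sum) (auto intro: set_int_u[OF g])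
  finally have le: "d \<le> (\<Sum>z\<in>C. (LINT y:ball z \<sigma>|lborel. u y))" using ud by simp
  show False
  proof (cases "C = {}")
    case True thus False using le d by simp
  next
    case False
    hence cp: "card C > 0" using C by auto
    have "real (card C) * (\<Sum>z\<in>C. (LINT y:ball z \<sigma>|lborel. u y)) < (\<Sum>z\<in>C. d)"
      unfolding sum_distrib_left using lt False C by (intro sum_strict_mono) auto
    also have "\<dots> = real (card C) * d" by simp
    finally show False using le cp by (smt (verit) mult_left_mono of_nat_0_le_iff)
  qed
qed

lemma good_iter: "kappa_assm \<kappa> \<Longrightarrow> good u B \<Longrightarrow> good ((conv_op \<kappa> ^^ j) u) B"
  by (induction j) (auto intro: good_conv)

lemma iter_le: "kappa_assm \<kappa> \<Longrightarrow> good u B \<Longrightarrow> ((conv_op \<kappa> ^^ Suc j) u) x \<le> B"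
  using good_conv(2)[OF _ good_iter] by simp

lemma ball_meas: "measure lborel (ball (z::'a::euclidean_space) s) = measure lborel (ball (0::'a) s)"
proof (cases "s \<ge> 0")
  case True thus ?thesis using content_ball[OF True, of z] content_ball[OF True, of "0::'a"] by linarith
qed (simp add: ball_empty)

lemma walk:
  assumes k: "kappa_assm \<kappa>" and c: "\<forall>y. norm y < \<rho> \<longrightarrow> \<kappa> y \<ge> c" and c0: "c \<ge> 0"
    and s: "4 * \<sigma> \<le> \<rho>" "\<sigma> > 0" and g: "good (w::'a::euclidean_space \<Rightarrow> real) B" and wa: "\<forall>y\<in>ball z1 \<sigma>. w y \<ge> a" and a0: "a \<ge> 0"
  shows "\<forall>z. norm (z - z1) \<le> 2 * \<sigma> * real m \<longrightarrow>
     (\<forall>y\<in>ball z \<sigma>. (conv_op \<kappa> ^^ m) w y \<ge> a * (c * measure lborel (ball (0::'a) \<sigma>)) ^ m)"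
proof (induction m)
  case 0
  then show ?case using wa by simp
next
  case (Suc m)
  let ?b = "c * measure lborel (ball (0::'a) \<sigma>)"
  show ?case
  proof (intro allI impI ballI)
    fix z y assume z: "norm (z - z1) \<le> 2 * \<sigma> * real (Suc m)" and y: "y \<in> ball z \<sigma>"
    define t where "t = real m / real (Suc m)"
    have t0: "0 \<le> t" "t \<le> 1" unfolding t_def by auto
    define z' where "z' = z1 + t *\<^sub>R (z - z1)"
    have "norm (z' - z1) = t * norm (z - z1)" unfolding z'_def using t0 by simp
    also have "\<dots> \<le> t * (2 * \<sigma> * real (Suc m))" using z t0 by (simp add: mult_left_mono)
    also have "\<dots> = 2 * \<sigma> * real m" unfolding t_def by simp
    finally have z1': "norm (z' - z1) \<le> 2 * \<sigma> * real m" .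
    have "z - z' = (1 - t) *\<^sub>R (z - z1)" unfolding z'_def by (simp add: algebra_simps)
    hence "norm (z - z') = (1 - t) * norm (z - z1)" using t0 by simp
    also have "\<dots> \<le> (1 - t) * (2 * \<sigma> * real (Suc m))" using z t0 by (simp add: mult_left_mono)
    also have "(1 - t) = 1 / real (Suc m)" unfolding t_def by (simp add: field_simps)
    finally have zz: "norm (z - z') \<le> 2 * \<sigma>" by simp
    have y3: "y \<in> ball z' (3 * \<sigma>)"
    proof -
      have "norm (z' - y) \<le> norm (z - z') + norm (z - y)"
        using norm_triangle_ineq4[of "z - y" "z - z'"] by (simp add: norm_minus_commute)
      thus ?thesis using y zz by (simp add: dist_norm)
    qed
    have IH: "\<forall>y\<in>ball z' \<sigma>. (conv_op \<kappa> ^^ m) w y \<ge> a * ?b ^ m" using Suc z1' by blast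
    have ab: "a * ?b ^ m \<ge> 0" using a0 c0 by simp
    have "conv_op \<kappa> ((conv_op \<kappa> ^^ m) w) y \<ge> c * (a * ?b ^ m) * measure lborel (ball z' \<sigma>)"
      by (rule step_low[OF k c c0 good_iter[OF k g] IH ab s(1) y3])
    moreover have "measure lborel (ball z' \<sigma>) = measure lborel (ball (0::'a) \<sigma>)" by (rule ball_meas)
    ultimately have "conv_op \<kappa> ((conv_op \<kappa> ^^ m) w) y \<ge> a * ?b ^ Suc m"
      by (simp add: algebra_simps)
    thus "(conv_op \<kappa> ^^ Suc m) w y \<ge> a * ?b ^ Suc m" by simp
  qed
qed



theorem proposition2p5:
  fixes \<kappa> :: "'a::euclidean_space \<Rightarrow> real" and \<delta>0 r0 :: real
  assumes "kappa_assm \<kappa>" and "0 < \<delta>0" and "\<delta>0 < 1" and "r0 > 0"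
  shows "\<forall>k::nat. k > 0 \<longrightarrow>
    (\<exists>\<mu>>0. \<exists>i::nat. i > 0 \<and>
      (\<forall>u. Linf_nonneg u \<and> (LINT x:ball 0 r0|lborel. u x) \<ge> \<delta>0 \<longrightarrow>
         (\<forall>x\<in>ball 0 (real k * r0).
            (\<Sum>j\<le>i. ((conv_op \<kappa> ^^ j) u) x / fact j) \<ge> \<mu> \<and>
            (\<Sum>j. ((conv_op \<kappa> ^^ j) u) x / fact j) \<ge> \<mu>)))"
proof (intro allI impI)
  fix k :: nat assume "k > 0"
  have ka: "kappa_assm \<kappa>" by fact
  have k0: "\<kappa> 0 > 0" using ka unfolding kappa_assm_def by blast
  have "continuous_on UNIV \<kappa>" by (rule kappa_cont[OF ka])
  then obtain \<rho> where \<rho>: "\<rho> > 0" "\<forall>y. dist y 0 < \<rho> \<longrightarrow> dist (\<kappa> y) (\<kappa> 0) < \<kappa> 0 / 2"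
    unfolding continuous_on_iff using k0 by (metis UNIV_I half_gt_zero)
  define c where "c = \<kappa> 0 / 2"
  have c0: "c > 0" unfolding c_def using k0 by simp
  have cb: "\<forall>y. norm y < \<rho> \<longrightarrow> \<kappa> y \<ge> c"
  proof (intro allI impI)
    fix y :: 'a assume "norm y < \<rho>"
    hence "dist (\<kappa> y) (\<kappa> 0) < \<kappa> 0 / 2" using \<rho> by simp
    thus "\<kappa> y \<ge> c" unfolding c_def dist_real_def by linarith
  qed
  define \<sigma> where "\<sigma> = \<rho> / 4"
  have s0: "\<sigma> > 0" "4 * \<sigma> \<le> \<rho>" unfolding \<sigma>_def using \<rho> by auto
  have sc: "seq_compact (cball (0::'a) r0)" by (simp add: compact_imp_seq_compact)
  have "\<exists>C. finite C \<and> C \<subseteq> cball 0 r0 \<and> cball (0::'a) r0 \<subseteq> (\<Union>x\<in>C. ball x \<sigma>)"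
    by (rule seq_compact_imp_totally_bounded[OF sc, rule_format, OF s0(1)])
  then obtain C where C: "finite C" "C \<subseteq> cball 0 r0" "cball (0::'a) r0 \<subseteq> (\<Union>x\<in>C. ball x \<sigma>)" by blast
  have Cb: "ball (0::'a) r0 \<subseteq> (\<Union>x\<in>C. ball x \<sigma>)" using C(3) by auto
  have "(0::'a) \<in> cball 0 r0" using assms(4) by simp
  hence "C \<noteq> {}" using C(3) by auto
  hence Np: "card C > 0" using C(1) by auto
  define N where "N = real (card C)"
  have N0: "N > 0" unfolding N_def using Np by simp
  define b where "b = c * measure lborel (ball (0::'a) \<sigma>)"
  have b0: "b > 0" unfolding b_def using c0 s0 content_ball_gt_0_iff[of "0::'a" \<sigma>] by simp
  define n where "n = nat \<lceil>(real k * r0 + r0) / (2 * \<sigma>)\<rceil>"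
  have nb: "real k * r0 + r0 \<le> 2 * \<sigma> * real n"
  proof -
    have "(real k * r0 + r0) / (2 * \<sigma>) \<le> real n" unfolding n_def by linarith
    thus ?thesis using s0 by (simp add: field_simps)
  qed
  define a1 where "a1 = c * (\<delta>0 / N)"
  have a10: "a1 > 0" unfolding a1_def using c0 N0 assms(2) by simp
  define \<mu> where "\<mu> = a1 * b ^ n / fact (Suc n)"
  have \<mu>0: "\<mu> > 0" unfolding \<mu>_def using a10 b0 by simp
  show "\<exists>\<mu>>0. \<exists>i::nat. i > 0 \<and>
      (\<forall>u. Linf_nonneg u \<and> (LINT x:ball 0 r0|lborel. u x) \<ge> \<delta>0 \<longrightarrow>
         (\<forall>x\<in>ball 0 (real k * r0).
            (\<Sum>j\<le>i. ((conv_op \<kappa> ^^ j) u) x / fact j) \<ge> \<mu> \<and>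
            (\<Sum>j. ((conv_op \<kappa> ^^ j) u) x / fact j) \<ge> \<mu>))"
  proof (rule exI[of _ \<mu>], rule conjI[OF \<mu>0], rule exI[of _ "Suc n"], rule conjI[OF zero_less_Suc], intro allI impI ballI)
    fix u :: "'a \<Rightarrow> real" and x :: 'a
    assume u: "Linf_nonneg u \<and> (LINT x:ball 0 r0|lborel. u x) \<ge> \<delta>0" and x: "x \<in> ball 0 (real k * r0)"
    show "(\<Sum>j\<le>Suc n. ((conv_op \<kappa> ^^ j) u) x / fact j) \<ge> \<mu> \<and> (\<Sum>j. ((conv_op \<kappa> ^^ j) u) x / fact j) \<ge> \<mu>"
    proof -
    obtain B where B: "AE x in lborel. \<bar>u x\<bar> \<le> B" using u unfolding Linf_nonneg_def by blast
    have g: "good u B" using u B unfolding Linf_nonneg_def good_def by (auto elim!: eventually_mono)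
    obtain z1 where z1: "z1 \<in> C" "N * (LINT y:ball z1 \<sigma>|lborel. u y) \<ge> \<delta>0"
      using cover_pick[OF g C(1) Cb _ assms(2)] u unfolding N_def by blast
    have z1d: "(LINT y:ball z1 \<sigma>|lborel. u y) \<ge> \<delta>0 / N" using z1(2) N0 by (simp add: field_simps)
    define w where "w = conv_op \<kappa> u"
    have gw: "good w B" unfolding w_def by (rule good_conv(1)[OF ka g])
    have wa: "\<forall>y\<in>ball z1 \<sigma>. w y \<ge> a1"
    proof
      fix y assume "y \<in> ball z1 \<sigma>"
      hence "y \<in> ball z1 (3 * \<sigma>)" using s0 by auto
      thus "w y \<ge> a1" unfolding w_def a1_def
        by (rule step_first[OF ka cb less_imp_le[OF c0] g z1d s0(2)])
    qed
    have W: "\<forall>z. norm (z - z1) \<le> 2 * \<sigma> * real n \<longrightarrow>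
       (\<forall>y\<in>ball z \<sigma>. (conv_op \<kappa> ^^ n) w y \<ge> a1 * b ^ n)"
      unfolding b_def by (rule walk[OF ka cb _ s0(2) s0(1) gw wa]) (use c0 a10 in auto)
    have "norm (x - z1) \<le> norm x + norm z1" by (rule norm_triangle_ineq4)
    also have "\<dots> \<le> real k * r0 + r0" using x z1(1) C(2) by (auto simp: subset_iff)
    finally have "norm (x - z1) \<le> 2 * \<sigma> * real n" using nb by linarith
    hence "(conv_op \<kappa> ^^ n) w x \<ge> a1 * b ^ n" using W s0 by auto
    hence key: "(conv_op \<kappa> ^^ Suc n) u x \<ge> a1 * b ^ n" unfolding w_def
      by (simp add: funpow_Suc_right del: funpow.simps)
    define t where "t = (\<lambda>j. ((conv_op \<kappa> ^^ j) u) x / fact j)"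
    have tnn: "t j \<ge> 0" for j unfolding t_def using good_iter[OF ka g, of j] by (simp add: good_def)
    have "\<mu> \<le> t (Suc n)" unfolding t_def \<mu>_def using key by (simp add: divide_right_mono)
    also have "\<dots> \<le> (\<Sum>j\<le>Suc n. t j)" by (rule member_le_sum) (auto intro: tnn)
    finally have S1: "\<mu> \<le> (\<Sum>j\<le>Suc n. t j)" .
    have summ: "summable t"
    proof (rule summable_comparison_test)
      show "summable (\<lambda>j. max B (u x) * (inverse (fact j) * 1 ^ j))"
        by (intro summable_mult summable_exp)
      show "\<exists>N. \<forall>j\<ge>N. norm (t j) \<le> max B (u x) * (inverse (fact j) * 1 ^ j)"
      proof (intro exI allI impI)
        fix j :: nat
        have "((conv_op \<kappa> ^^ j) u) x \<le> max B (u x)"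
        proof (cases j)
          case 0 thus ?thesis by simp
        next
          case (Suc j') thus ?thesis using iter_le[OF ka g, of j' x] by simp
        qed
        thus "norm (t j) \<le> max B (u x) * (inverse (fact j) * 1 ^ j)"
          using tnn[of j] unfolding t_def by (simp add: divide_right_mono field_simps)
      qed
    qed
    have "(\<Sum>j\<le>Suc n. t j) \<le> suminf t"
      by (rule sum_le_suminf[OF summ]) (auto intro: tnn)
    thus ?thesis using S1 unfolding t_def by auto
    qed
  qed
qed
end
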